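(* Let $X$ be a comical set, $x,y$ $0$-cubes of $X$, and $f,g$ $1$-cubes of $X$ with $f\partial_{1,0}=g\partial_{1,0}=x$ and $f\partial_{1,1}=g\partial_{1,1}=y$. Describe a $2$-cube $s$ by its quadruple of faces $(s\partial_{1,0},\,s\partial_{1,1},\,s\partial_{2,0},\,s\partial_{2,1})$. Consider the following eight boundary conditions: (1) $(g,\,y\sigma_1,\,f,\,y\sigma_1)$; (2) $(f,\,y\sigma_1,\,g,\,y\sigma_1)$; (3) $(f,\,g,\,x\sigma_1,\,y\sigma_1)$; (4) $(g,\,f,\,x\sigma_1,\,y\sigma_1)$; (5) $(x\sigma_1,\,y\sigma_1,\,f,\,g)$; (6) $(x\sigma_1,\,y\sigma_1,\,g,\,f)$; (7) $(x\sigma_1,\,f,\,x\sigma_1,\,g)$; (8) $(x\sigma_1,\,g,\,x\sigma_1,\,f)$. If there is a marked $2$-cube in $X$ satisfying one of these boundary conditions, then for each of the other seven conditions there is also a marked $2$-cube in $X$ satisfying it.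
   Context: Cubical sets are presheaves on the box category $\square$ (objects $[1]^n=\{0<1\}^n$; morphisms generated by faces $\partial_{i,\varepsilon}\colon[1]^{n-1}\to[1]^n$ inserting $\varepsilon$ as $i$-th coordinate, degeneracies $\sigma_i\colon[1]^n\to[1]^{n-1}$ deleting the $i$-th coordinate, and connections $\gamma_{i,1},\gamma_{i,0}\colon[1]^n\to[1]^{n-1}$ replacing $x_i,x_{i+1}$ by their max, resp. min); operators act on the right, so for a $0$-cube $x$, $x\sigma_1$ is the degenerate $1$-cube at $x$. A cube is degenerate if it is $x\sigma_i$ or $x\gamma_{i,\varepsilon}$; composites of faces have unique normal forms $\partial_{k_1,\varepsilon_1}\cdots\partial_{k_t,\varepsilon_t}$, $k_1>\dots>k_t$. A marked cubical set is a cubical set with marked cubes of positive dimension containing all degenerate cubes. $\tau_jX$ is $X$ with all cubes of dimension $\ge j+1$ marked. For $n\ge1$, $1\le k\le n$, $\varepsilon\in\{0,1\}$: $\square^n_{k,\varepsilon}$ is $\square^n$ in which a non-degenerate positive-dimensional face in normal form is marked iff none of its factors is $\partial_{k-1,\varepsilon},\partial_{k,0},\partial_{k,1},\partial_{k+1,\varepsilon}$; $\sqcap^n_{k,\varepsilon}$ is the union of codimension-one faces except $\partial_{k,\varepsilon}$, regularly marked. For $n\ge2$, $(\square^n_{k,\varepsilon})''=\tau_{n-2}\square^n_{k,\varepsilon}$ and $(\square^n_{k,\varepsilon})'$ is $\square^n_{k,\varepsilon}$ with all $(n-1)$-faces other than $\partial_{k,\varepsilon}$ marked. A comical set is a marked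 cubical set with the right lifting property against all $\sqcap^n_{k,\varepsilon}\hookrightarrow\square^n_{k,\varepsilon}$ and all $(\square^n_{k,\varepsilon})'\hookrightarrow(\square^n_{k,\varepsilon})''$. *)

theory Defs
  imports Main
begin

text \<open>Points of [1]^n are boolean lists of length n (False = 0, True = 1).
  Generating maps, indices 1-based as in the paper.\<close>

definition face_op :: "nat \<Rightarrow> bool \<Rightarrow> bool list \<Rightarrow> bool list" where
  "face_op i e xs = take (i - 1) xs @ e # drop (i - 1) xs"

definition degen_op :: "nat \<Rightarrow> bool list \<Rightarrow> bool list" where
  "degen_op i xs = take (i - 1) xs @ drop i xs"

definition conn_op :: "nat \<Rightarrow> bool \<Rightarrow> bool list \<Rightarrow> bool list" where
  "conn_op i e xs = take (i - 1) xs @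
     (if e then (xs ! (i - 1) \<or> xs ! i) else (xs ! (i - 1) \<and> xs ! i)) # drop (i + 1) xs"

inductive box_mor :: "nat \<Rightarrow> nat \<Rightarrow> (bool list \<Rightarrow> bool list) \<Rightarrow> bool" where
  bm_id: "box_mor n n id"
| bm_face: "box_mor m n f \<Longrightarrow> 1 \<le> i \<Longrightarrow> i \<le> Suc n \<Longrightarrow> box_mor m (Suc n) (face_op i e \<circ> f)"
| bm_degen: "box_mor m (Suc n) f \<Longrightarrow> 1 \<le> i \<Longrightarrow> i \<le> Suc n \<Longrightarrow> box_mor m n (degen_op i \<circ> f)"
| bm_conn: "box_mor m (Suc (Suc n)) f \<Longrightarrow> 1 \<le> i \<Longrightarrow> i \<le> Suc n \<Longrightarrow>
            box_mor m (Suc n) (conn_op i e \<circ> f)"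

text \<open>act X m n f x = x f  (right action) for x an n-cube and f : [1]^m \<rightarrow> [1]^n.
  marked X n x: x is a marked n-cube.\<close>
record 'a mcset =
  cubes :: "nat \<Rightarrow> 'a set"
  act :: "nat \<Rightarrow> nat \<Rightarrow> (bool list \<Rightarrow> bool list) \<Rightarrow> 'a \<Rightarrow> 'a"
  marked :: "nat \<Rightarrow> 'a \<Rightarrow> bool"

definition cubical_set :: "'a mcset \<Rightarrow> bool" where
  "cubical_set X \<longleftrightarrow>
     (\<forall>m n f x. box_mor m n f \<longrightarrow> x \<in> cubes X n \<longrightarrow> act X m n f x \<in> cubes X m) \<and>
     (\<forall>m n f g x. box_mor m n f \<longrightarrow> box_mor m n g \<longrightarrow>
        (\<forall>xs. length xs = m \<longrightarrow> f xs = g xs) \<longrightarrow> x \<in> cubes X n \<longrightarrow>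
        act X m n f x = act X m n g x) \<and>
     (\<forall>n x. x \<in> cubes X n \<longrightarrow> act X n n id x = x) \<and>
     (\<forall>m n p f g x. box_mor m n f \<longrightarrow> box_mor n p g \<longrightarrow> x \<in> cubes X p \<longrightarrow>
        act X m p (g \<circ> f) x = act X m n f (act X n p g x))"

definition marked_cubical_set :: "'a mcset \<Rightarrow> bool" where
  "marked_cubical_set X \<longleftrightarrow> cubical_set X \<and>
     (\<forall>n x. marked X n x \<longrightarrow> 0 < n \<and> x \<in> cubes X n) \<and>
     (\<forall>n i x. x \<in> cubes X n \<longrightarrow> 1 \<le> i \<longrightarrow> i \<le> Suc n \<longrightarrow>
        marked X (Suc n) (act X (Suc n) n (degen_op i) x)) \<and>
     (\<forall>n i e x. x \<in> cubes X (Suc n) \<longrightarrow> 1 \<le> i \<longrightarrow> i \<le> Suc n \<longrightarrow>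
        marked X (Suc (Suc n)) (act X (Suc (Suc n)) (Suc n) (conn_op i e) x))"

text \<open>A list [(k1,e1),...,(kt,et)] with k1 > ... > kt denotes the face
  \<partial>_{k1,e1} ... \<partial>_{kt,et} of [1]^n, of dimension n - t.\<close>
definition normal_face :: "nat \<Rightarrow> (nat \<times> bool) list \<Rightarrow> bool" where
  "normal_face n ks \<longleftrightarrow> sorted_wrt (\<lambda>a b. fst b < fst a) ks \<and> (\<forall>(i, e) \<in> set ks. 1 \<le> i \<and> i \<le> n)"

definition fcomp :: "(nat \<times> bool) list \<Rightarrow> bool list \<Rightarrow> bool list" where
  "fcomp ks = foldr (\<lambda>(i, e) h. face_op i e \<circ> h) ks id"

definition face_cube :: "'a mcset \<Rightarrow> nat \<Rightarrow> (nat \<times> bool) list \<Rightarrow> 'a \<Rightarrow> 'a" where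
  "face_cube X n ks x = act X (n - length ks) n (fcomp ks) x"

text \<open>Marking of \<box>^n_{k,e}: no factor among \<partial>_{k-1,e}, \<partial>_{k,0}, \<partial>_{k,1}, \<partial>_{k+1,e}.\<close>
definition good_face :: "nat \<Rightarrow> bool \<Rightarrow> (nat \<times> bool) list \<Rightarrow> bool" where
  "good_face k e ks \<longleftrightarrow> (\<forall>(i, d) \<in> set ks. (i, d) \<noteq> (k - 1, e) \<and> i \<noteq> k \<and> (i, d) \<noteq> (k + 1, e))"

text \<open>Maps of marked cubical sets \<box>^n_{k,e} \<rightarrow> X (by Yoneda: n-cubes x).\<close>
definition box_map :: "'a mcset \<Rightarrow> nat \<Rightarrow> nat \<Rightarrow> bool \<Rightarrow> 'a \<Rightarrow> bool" where
  "box_map X n k e x \<longleftrightarrow> x \<in> cubes X n \<and>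
     (\<forall>ks. normal_face n ks \<and> length ks < n \<and> good_face k e ks \<longrightarrow>
        marked X (n - length ks) (face_cube X n ks x))"

definition box_map' :: "'a mcset \<Rightarrow> nat \<Rightarrow> nat \<Rightarrow> bool \<Rightarrow> 'a \<Rightarrow> bool" where
  "box_map' X n k e x \<longleftrightarrow> box_map X n k e x \<and>
     (\<forall>i d. 1 \<le> i \<and> i \<le> n \<and> (i, d) \<noteq> (k, e) \<longrightarrow> marked X (n - 1) (face_cube X n [(i, d)] x))"

text \<open>Maps (\<box>^n_{k,e})'' = \<tau>_{n-2} \<box>^n_{k,e} \<rightarrow> X.\<close>
definition box_map'' :: "'a mcset \<Rightarrow> nat \<Rightarrow> nat \<Rightarrow> bool \<Rightarrow> 'a \<Rightarrow> bool" where
  "box_map'' X n k e x \<longleftrightarrow> box_map X n k e x \<and>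
     (\<forall>ks. normal_face n ks \<and> length ks \<le> 1 \<longrightarrow> marked X (n - length ks) (face_cube X n ks x))"

text \<open>Maps \<sqcap>^n_{k,e} \<rightarrow> X: compatible families y i d of (n-1)-cubes, (i,d) \<noteq> (k,e),
  sending regularly marked faces to marked cubes.\<close>
definition open_box_map :: "'a mcset \<Rightarrow> nat \<Rightarrow> nat \<Rightarrow> bool \<Rightarrow> (nat \<Rightarrow> bool \<Rightarrow> 'a) \<Rightarrow> bool" where
  "open_box_map X n k e y \<longleftrightarrow>
     (\<forall>i d. 1 \<le> i \<and> i \<le> n \<and> (i, d) \<noteq> (k, e) \<longrightarrow> y i d \<in> cubes X (n - 1)) \<and>
     (\<forall>i d j d'. 1 \<le> i \<and> i < j \<and> j \<le> n \<and> (i, d) \<noteq> (k, e) \<and> (j, d') \<noteq> (k, e) \<longrightarrow>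
        act X (n - 2) (n - 1) (face_op i d) (y j d') = act X (n - 2) (n - 1) (face_op (j - 1) d') (y i d)) \<and>
     (\<forall>i d ks. normal_face n ((i, d) # ks) \<and> Suc (length ks) < n \<and> good_face k e ((i, d) # ks) \<longrightarrow>
        marked X (n - 1 - length ks) (face_cube X (n - 1) ks (y i d)))"

definition comical :: "'a mcset \<Rightarrow> bool" where
  "comical X \<longleftrightarrow> marked_cubical_set X \<and>
     (\<forall>n k e y. 1 \<le> n \<and> 1 \<le> k \<and> k \<le> n \<and> open_box_map X n k e y \<longrightarrow>
        (\<exists>x. box_map X n k e x \<and>
           (\<forall>i d. 1 \<le> i \<and> i \<le> n \<and> (i, d) \<noteq> (k, e) \<longrightarrow> face_cube X n [(i, d)] x = y i d))) \<and>
     (\<forall>n k e x. 2 \<le> n \<and> 1 \<le> k \<and> k \<le> n \<and> box_map' X n k e x \<longrightarrow> box_map'' X n k e x)"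

end

theory Submission
  imports Defs
begin


lemma bm_face1: "1 \<le> i \<Longrightarrow> i \<le> Suc n \<Longrightarrow> box_mor n (Suc n) (face_op i e)"
  using bm_face[OF bm_id, of i n e] by simp
lemma bm_degen1: "1 \<le> i \<Longrightarrow> i \<le> Suc n \<Longrightarrow> box_mor (Suc n) n (degen_op i)"
  using bm_degen[OF bm_id, of i n] by simp
lemma bm_conn1: "1 \<le> i \<Longrightarrow> i \<le> Suc n \<Longrightarrow> box_mor (Suc (Suc n)) (Suc n) (conn_op i e)"
  using bm_conn[OF bm_id, of i n e] by simp
lemma bm_comp: "box_mor a b g \<Longrightarrow> box_mor c a h \<Longrightarrow> box_mor c b (g \<circ> h)"
proof (induction rule: box_mor.induct)
  case (bm_id n) then show ?case by simp
next
  case (bm_face m n f i e) then show ?case using box_mor.bm_face[of c n "f \<circ> h" i e] by (simp only: comp_assoc)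
next
  case (bm_degen m n f i) then show ?case using box_mor.bm_degen[of c n "f \<circ> h" i] by (simp only: comp_assoc)
next
  case (bm_conn m n f i e) then show ?case using box_mor.bm_conn[of c n "f \<circ> h" i e] by (simp only: comp_assoc)
qed

lemma act_eq2:
  assumes "cubical_set X" "box_mor m n F" "box_mor n p G" "box_mor m n' F'" "box_mor n' p G'"
    "\<forall>xs. length xs = m \<longrightarrow> G (F xs) = G' (F' xs)" "z \<in> cubes X p"
  shows "act X m n F (act X n p G z) = act X m n' F' (act X n' p G' z)"
proof -
  have c: "\<And>m n p f g x. box_mor m n f \<Longrightarrow> box_mor n p g \<Longrightarrow> x \<in> cubes X p \<Longrightarrow>
        act X m p (g \<circ> f) x = act X m n f (act X n p g x)"
   and e: "\<And>m n f g x. box_mor m n f \<Longrightarrow> box_mor m n g \<Longrightarrow>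
        (\<forall>xs. length xs = m \<longrightarrow> f xs = g xs) \<Longrightarrow> x \<in> cubes X n \<Longrightarrow>
        act X m n f x = act X m n g x" using assms(1) unfolding cubical_set_def by blast+
  have "act X m n F (act X n p G z) = act X m p (G \<circ> F) z" using c assms by simp
  also have "\<dots> = act X m p (G' \<circ> F') z" using e[of m p "G \<circ> F" "G' \<circ> F'"] assms bm_comp by auto
  also have "\<dots> = act X m n' F' (act X n' p G' z)" using c assms by simp
  finally show ?thesis .
qed

lemma act_eq_id:
  assumes "cubical_set X" "box_mor m n F" "box_mor n m G"
    "\<forall>xs. length xs = m \<longrightarrow> G (F xs) = xs" "z \<in> cubes X m"
  shows "act X m n F (act X n m G z) = z"
proof -
  have c: "\<And>m n p f g x. box_mor m n f \<Longrightarrow> box_mor n p g \<Longrightarrow> x \<in> cubes X p \<Longrightarrow>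
        act X m p (g \<circ> f) x = act X m n f (act X n p g x)"
   and e: "\<And>m n f g x. box_mor m n f \<Longrightarrow> box_mor m n g \<Longrightarrow>
        (\<forall>xs. length xs = m \<longrightarrow> f xs = g xs) \<Longrightarrow> x \<in> cubes X n \<Longrightarrow>
        act X m n f x = act X m n g x"
   and i: "\<And>n x. x \<in> cubes X n \<Longrightarrow> act X n n id x = x" using assms(1) unfolding cubical_set_def by blast+
  have "act X m n F (act X n m G z) = act X m m (G \<circ> F) z" using c assms by simp
  also have "\<dots> = act X m m id z" using e[of m m "G \<circ> F" id] assms bm_comp bm_id by auto
  finally show ?thesis using i assms by simp
qed

lemma act_cubes: "cubical_set X \<Longrightarrow> box_mor m n f \<Longrightarrow> x \<in> cubes X n \<Longrightarrow> act X m n f x \<in> cubes X m"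
  unfolding cubical_set_def by blast

lemma bmf01: "1 \<le> i \<Longrightarrow> i \<le> 1 \<Longrightarrow> box_mor 0 1 (face_op i e)"
  using bm_face1[of i 0 e] by simp
lemma bmf12: "1 \<le> i \<Longrightarrow> i \<le> 2 \<Longrightarrow> box_mor 1 2 (face_op i e)"
  using bm_face1[of i 1 e] by (simp add: numeral_2_eq_2)
lemma bmf23: "1 \<le> i \<Longrightarrow> i \<le> 3 \<Longrightarrow> box_mor 2 3 (face_op i e)"
  using bm_face1[of i 2 e] by (simp add: numeral_2_eq_2 numeral_3_eq_3)

lemmas bms = bm_face1 bm_degen1 bm_conn1 bm_comp

lemma len1: "(\<forall>xs. length xs = Suc 0 \<longrightarrow> P xs) = (\<forall>a. P [a])"
  by (auto simp: length_Suc_conv)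
lemma len0: "(\<forall>xs. length xs = 0 \<longrightarrow> P xs) = P []" by auto


abbreviation "sg X p \<equiv> act X 1 0 (degen_op 1) p"
abbreviation "bd X e h \<equiv> act X 0 1 (face_op 1 e) h"

context fixes X :: "'a mcset" assumes cs: "cubical_set X"
begin

lemma pt_face: "p \<in> cubes X 0 \<Longrightarrow> act X 0 1 (face_op 1 d) (act X 1 0 (degen_op 1) p) = p"
  by (rule act_eq_id[OF cs]) (auto simp: face_op_def degen_op_def intro!: bms)



lemma D1_f1: "h \<in> cubes X 1 \<Longrightarrow> act X 1 2 (face_op 1 d) (act X 2 1 (degen_op 1) h) = h"
  by (rule act_eq_id[OF cs]) (auto simp: face_op_def degen_op_def numeral_2_eq_2 length_Suc_conv intro!: bms)
lemma D1_f2: "h \<in> cubes X 1 \<Longrightarrow> act X 1 2 (face_op 2 d) (act X 2 1 (degen_op 1) h) = sg X (bd X d h)"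
  by (rule act_eq2[OF cs]) (auto simp: face_op_def degen_op_def numeral_2_eq_2 length_Suc_conv intro!: bms)
lemma D2_f1: "h \<in> cubes X 1 \<Longrightarrow> act X 1 2 (face_op 1 d) (act X 2 1 (degen_op 2) h) = sg X (bd X d h)"
  by (rule act_eq2[OF cs]) (auto simp: face_op_def degen_op_def numeral_2_eq_2 length_Suc_conv intro!: bms)
lemma D2_f2: "h \<in> cubes X 1 \<Longrightarrow> act X 1 2 (face_op 2 d) (act X 2 1 (degen_op 2) h) = h"
  by (rule act_eq_id[OF cs]) (auto simp: face_op_def degen_op_def numeral_2_eq_2 length_Suc_conv intro!: bms)
lemma C1_f1F: "h \<in> cubes X 1 \<Longrightarrow> act X 1 2 (face_op 1 False) (act X 2 1 (conn_op 1 True) h) = h"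
  by (rule act_eq_id[OF cs]) (auto simp: face_op_def conn_op_def numeral_2_eq_2 length_Suc_conv intro!: bms)
lemma C1_f2F: "h \<in> cubes X 1 \<Longrightarrow> act X 1 2 (face_op 2 False) (act X 2 1 (conn_op 1 True) h) = h"
  by (rule act_eq_id[OF cs]) (auto simp: face_op_def conn_op_def numeral_2_eq_2 length_Suc_conv intro!: bms)
lemma C1_f1T: "h \<in> cubes X 1 \<Longrightarrow> act X 1 2 (face_op 1 True) (act X 2 1 (conn_op 1 True) h) = sg X (bd X True h)"
  by (rule act_eq2[OF cs]) (auto simp: face_op_def degen_op_def conn_op_def numeral_2_eq_2 length_Suc_conv intro!: bms)
lemma C1_f2T: "h \<in> cubes X 1 \<Longrightarrow> act X 1 2 (face_op 2 True) (act X 2 1 (conn_op 1 True) h) = sg X (bd X True h)"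
  by (rule act_eq2[OF cs]) (auto simp: face_op_def degen_op_def conn_op_def numeral_2_eq_2 length_Suc_conv intro!: bms)
lemma C0_f1T: "h \<in> cubes X 1 \<Longrightarrow> act X 1 2 (face_op 1 True) (act X 2 1 (conn_op 1 False) h) = h"
  by (rule act_eq_id[OF cs]) (auto simp: face_op_def conn_op_def numeral_2_eq_2 length_Suc_conv intro!: bms)
lemma C0_f2T: "h \<in> cubes X 1 \<Longrightarrow> act X 1 2 (face_op 2 True) (act X 2 1 (conn_op 1 False) h) = h"
  by (rule act_eq_id[OF cs]) (auto simp: face_op_def conn_op_def numeral_2_eq_2 length_Suc_conv intro!: bms)
lemma C0_f1F: "h \<in> cubes X 1 \<Longrightarrow> act X 1 2 (face_op 1 False) (act X 2 1 (conn_op 1 False) h) = sg X (bd X False h)"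
  by (rule act_eq2[OF cs]) (auto simp: face_op_def degen_op_def conn_op_def numeral_2_eq_2 length_Suc_conv intro!: bms)
lemma C0_f2F: "h \<in> cubes X 1 \<Longrightarrow> act X 1 2 (face_op 2 False) (act X 2 1 (conn_op 1 False) h) = sg X (bd X False h)"
  by (rule act_eq2[OF cs]) (auto simp: face_op_def degen_op_def conn_op_def numeral_2_eq_2 length_Suc_conv intro!: bms)

lemma sg_cubes: "p \<in> cubes X 0 \<Longrightarrow> sg X p \<in> cubes X 1"
  by (rule act_cubes[OF cs]) (auto intro!: bms)
lemma bd_cubes: "h \<in> cubes X 1 \<Longrightarrow> bd X e h \<in> cubes X 0"
  by (rule act_cubes[OF cs]) (auto intro!: bms)
lemma D_cubes: "h \<in> cubes X 1 \<Longrightarrow> i \<in> {1,2} \<Longrightarrow> act X 2 1 (degen_op i) h \<in> cubes X 2"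
  by (rule act_cubes[OF cs]) (auto simp: numeral_2_eq_2 length_Suc_conv intro!: bms)
lemma C_cubes: "h \<in> cubes X 1 \<Longrightarrow> act X 2 1 (conn_op 1 e) h \<in> cubes X 2"
  by (rule act_cubes[OF cs]) (auto simp: numeral_2_eq_2 length_Suc_conv intro!: bms)

lemmas face_simps = D1_f1 D1_f2 D2_f1 D2_f2 C1_f1F C1_f2F C1_f1T C1_f2T C0_f1T C0_f2T C0_f1F C0_f2F
  pt_face sg_cubes bd_cubes D_cubes C_cubes

end

lemma ff1: assumes "j < k" "1 \<le> j" "k \<le> 3"
  shows "face_op k e (face_op j e' [a]) = face_op j e' (face_op (k-1) e [a])"
proof -
  have "(j=1 \<and> k=2) \<or> (j=1 \<and> k=3) \<or> (j=2 \<and> k=3)" using assms by arith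
  thus ?thesis by (auto simp: face_op_def numeral_2_eq_2 numeral_3_eq_3)
qed

lemma ff2: assumes "k \<le> j" "1 \<le> k" "j \<le> 2"
  shows "face_op k e (face_op j e' [a]) = face_op (Suc j) e' (face_op k e [a])"
proof -
  have "(j=1 \<and> k=1) \<or> (j=2 \<and> k=1) \<or> (j=2 \<and> k=2)" using assms by arith
  thus ?thesis by (auto simp: face_op_def numeral_2_eq_2 numeral_3_eq_3)
qed

lemma fcomp1: "fcomp [(i,d)] = face_op i d" by (simp add: fcomp_def)

context fixes X :: "'a mcset" assumes mcs: "marked_cubical_set X"
begin
lemma dg: "\<And>n i x. x \<in> cubes X n \<Longrightarrow> 1 \<le> i \<Longrightarrow> i \<le> Suc n \<Longrightarrow>
        marked X (Suc n) (act X (Suc n) n (degen_op i) x)"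
  using mcs unfolding marked_cubical_set_def by blast
lemma cn: "\<And>n i e x. x \<in> cubes X (Suc n) \<Longrightarrow> 1 \<le> i \<Longrightarrow> i \<le> Suc n \<Longrightarrow>
        marked X (Suc (Suc n)) (act X (Suc (Suc n)) (Suc n) (conn_op i e) x)"
  using mcs unfolding marked_cubical_set_def by blast
lemma mk_sg: "p \<in> cubes X 0 \<Longrightarrow> marked X 1 (sg X p)"
  using dg[of p 0 1] by simp
lemma mk_D: "h \<in> cubes X 1 \<Longrightarrow> i \<in> {1,2} \<Longrightarrow> marked X 2 (act X 2 1 (degen_op i) h)"
  using dg[of h 1 i] by (auto simp: numeral_2_eq_2)
lemma mk_C: "h \<in> cubes X 1 \<Longrightarrow> marked X 2 (act X 2 1 (conn_op 1 e) h)"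
  using cn[of h 0 1 e] by (simp add: numeral_2_eq_2)
end

lemma fill:
  assumes X: "comical X" and k: "1 \<le> k" "k \<le> 3"
  and cub: "\<forall>i\<in>{1,2,3}. \<forall>d\<in>{True,False}. (i,d) \<noteq> (k,e) \<longrightarrow> y i d \<in> cubes X 2 \<and> marked X 2 (y i d)"
  and cmp: "\<forall>i\<in>{1,2,3}. \<forall>j\<in>{1,2,3}. \<forall>d\<in>{True,False}. \<forall>d'\<in>{True,False}. i < j \<longrightarrow> (i,d) \<noteq> (k,e) \<longrightarrow> (j,d') \<noteq> (k,e) \<longrightarrow>
      act X 1 2 (face_op i d) (y j d') = act X 1 2 (face_op (j-1) d') (y i d)"
  and edg: "\<forall>i\<in>{1,2,3}. \<forall>j\<in>{1,2,3}. \<forall>d\<in>{True,False}. \<forall>d'\<in>{True,False}. j < i \<longrightarrow> good_face k e [(i,d),(j,d')] \<longrightarrow>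
      marked X 1 (act X 1 2 (face_op j d') (y i d))"
  shows "\<exists>t. t \<in> cubes X 2 \<and> marked X 2 t \<and> (\<forall>j\<in>{1,2}. \<forall>e'\<in>{True,False}. act X 1 2 (face_op j e') t =
     (if j < k then act X 1 2 (face_op (k-1) e) (y j e') else act X 1 2 (face_op k e) (y (Suc j) e')))"
proof -
  have mcs: "marked_cubical_set X" using X unfolding comical_def by blast
  hence cs: "cubical_set X" unfolding marked_cubical_set_def by blast
  have in3: "\<And>i::nat. 1 \<le> i \<Longrightarrow> i \<le> 3 \<Longrightarrow> i \<in> {1,2,3}" by auto
  have bool: "\<And>d::bool. d \<in> {True,False}" by auto
  note cub' = cub[rule_format, OF _ bool]
  note cmp' = cmp[rule_format, OF _ _ bool bool]
  note edg' = edg[rule_format, OF _ _ bool bool]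
  have ob: "open_box_map X 3 k e y"
    unfolding open_box_map_def
  proof (intro conjI allI impI)
    fix i d assume a: "1 \<le> i \<and> i \<le> 3 \<and> (i, d) \<noteq> (k, e)"
    hence "i \<in> {1,2,3}" using in3 by blast
    thus "y i d \<in> cubes X (3 - 1)" using cub' a by simp
  next
    fix i d j d' assume a: "1 \<le> i \<and> i < j \<and> j \<le> 3 \<and> (i, d) \<noteq> (k, e) \<and> (j, d') \<noteq> (k, e)"
    hence "i \<in> {1,2,3}" "j \<in> {1,2,3}" using in3 by auto
    thus "act X (3 - 2) (3 - 1) (face_op i d) (y j d') = act X (3 - 2) (3 - 1) (face_op (j - 1) d') (y i d)"
      using cmp' a by simp
  next
    fix i d ks assume a: "normal_face 3 ((i, d) # ks) \<and> Suc (length ks) < 3 \<and> good_face k e ((i, d) # ks)"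
    hence i: "i \<in> {1,2,3}" "i \<noteq> k" using in3 unfolding normal_face_def good_face_def by auto
    show "marked X (3 - 1 - length ks) (face_cube X (3 - 1) ks (y i d))"
    proof (cases ks)
      case Nil
      have "y i d \<in> cubes X 2" "marked X 2 (y i d)" using cub' i by auto
      moreover have "act X 2 2 id (y i d) = y i d" using cs calculation(1) unfolding cubical_set_def by blast
      ultimately show ?thesis using Nil unfolding face_cube_def fcomp_def by simp
    next
      case (Cons p ks')
      obtain j d' where p: "p = (j,d')" by (cases p)
      have ks': "ks' = []" using a Cons by auto
      have j: "j < i" "1 \<le> j" using a Cons p ks' unfolding normal_face_def by auto
      hence "j \<in> {1,2,3}" using i by auto
      hence "marked X 1 (act X 1 2 (face_op j d') (y i d))" using edg' i j a Cons p ks' by auto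
      thus ?thesis using Cons p ks' by (simp add: face_cube_def fcomp1)
    qed
  qed
  obtain w where w: "box_map X 3 k e w"
     and wf: "\<forall>i d. 1 \<le> i \<and> i \<le> 3 \<and> (i, d) \<noteq> (k, e) \<longrightarrow> face_cube X 3 [(i, d)] w = y i d"
  proof -
    have c1: "\<forall>n k e y. 1 \<le> n \<and> 1 \<le> k \<and> k \<le> n \<and> open_box_map X n k e y \<longrightarrow>
        (\<exists>x. box_map X n k e x \<and>
           (\<forall>i d. 1 \<le> i \<and> i \<le> n \<and> (i, d) \<noteq> (k, e) \<longrightarrow> face_cube X n [(i, d)] x = y i d))"
      using X unfolding comical_def by blast
    have "(1::nat) \<le> 3" by simp
    with c1 ob k show ?thesis using that by blast
  qed
  have wf': "act X 2 3 (face_op i d) w = y i d" if "1 \<le> i" "i \<le> 3" "(i, d) \<noteq> (k, e)" for i d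
    using wf that by (simp add: face_cube_def fcomp1)
  have w3: "w \<in> cubes X 3" using w unfolding box_map_def by blast
  have "box_map' X 3 k e w"
    unfolding box_map'_def
  proof (intro conjI allI impI w)
    fix i d assume a: "1 \<le> i \<and> i \<le> 3 \<and> (i, d) \<noteq> (k, e)"
    hence "i \<in> {1,2,3}" using in3 by auto
    thus "marked X (3 - 1) (face_cube X 3 [(i, d)] w)" using wf a cub' by auto
  qed
  moreover have c2: "\<forall>n k e x. 2 \<le> n \<and> 1 \<le> k \<and> k \<le> n \<and> box_map' X n k e x \<longrightarrow> box_map'' X n k e x"
      using X unfolding comical_def by blast
  moreover have "(2::nat) \<le> 3" by simp
  ultimately have "box_map'' X 3 k e w" using k by blast
  hence "\<forall>ks. normal_face 3 ks \<and> length ks \<le> 1 \<longrightarrow> marked X (3 - length ks) (face_cube X 3 ks w)"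
    unfolding box_map''_def by blast
  moreover have "normal_face 3 [(k,e)]" using k by (simp add: normal_face_def)
  ultimately have "marked X (3 - length [(k,e)]) (face_cube X 3 [(k,e)] w)" by (metis le_refl list.size(3,4) One_nat_def add_0)
  hence mk: "marked X 2 (act X 2 3 (face_op k e) w)" by (simp add: face_cube_def fcomp1 numeral_3_eq_3 numeral_2_eq_2)
  define t where "t = act X 2 3 (face_op k e) w"
  have t2: "t \<in> cubes X 2" unfolding t_def using k by (intro act_cubes[OF cs _ w3] bm_face1[of k 2, simplified]) auto
  have tf: "act X 1 2 (face_op j e') t =
     (if j < k then act X 1 2 (face_op (k-1) e) (y j e') else act X 1 2 (face_op k e) (y (Suc j) e'))"
    if j: "1 \<le> j" "j \<le> 2" for j e'
  proof (cases "j < k")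
    case True
    have "act X 1 2 (face_op j e') t = act X 1 2 (face_op (k-1) e) (act X 2 3 (face_op j e') w)"
      unfolding t_def
      apply (rule act_eq2[OF cs _ _ _ _ _ w3])
      subgoal using j k True by (intro bmf12) auto
      subgoal using j k True by (intro bmf23) auto
      subgoal using j k True by (intro bmf12) auto
      subgoal using j k True by (intro bmf23) auto
      unfolding One_nat_def len1 using ff1[of j k] j k True by auto
    also have "\<dots> = act X 1 2 (face_op (k-1) e) (y j e')" using wf' j True k by auto
    finally show ?thesis using True by simp
  next
    case False
    have "act X 1 2 (face_op j e') t = act X 1 2 (face_op k e) (act X 2 3 (face_op (Suc j) e') w)"
      unfolding t_def
      apply (rule act_eq2[OF cs _ _ _ _ _ w3])
      subgoal using j k False by (intro bmf12) auto
      subgoal using j k False by (intro bmf23) auto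
      subgoal using j k False by (intro bmf12) auto
      subgoal using j k False by (intro bmf23) auto
      unfolding One_nat_def len1 using ff2[of k j] j k False by auto
    also have "\<dots> = act X 1 2 (face_op k e) (y (Suc j) e')" using wf' j False k by auto
    finally show ?thesis using False by simp
  qed
  show ?thesis using t2 mk tf unfolding t_def[symmetric] by auto
qed




definition cub6 :: "'a \<Rightarrow> 'a \<Rightarrow> 'a \<Rightarrow> 'a \<Rightarrow> 'a \<Rightarrow> 'a \<Rightarrow> nat \<Rightarrow> bool \<Rightarrow> 'a" where
  "cub6 a b c d e h = (\<lambda>i dd. if i = 1 then (if dd then b else a) else if i = 2 then (if dd then d else c) else (if dd then h else e))"

definition HAS :: "'a mcset \<Rightarrow> 'a \<Rightarrow> 'a \<Rightarrow> 'a \<Rightarrow> 'a \<Rightarrow> bool" where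
  "HAS X a b c d \<longleftrightarrow> (\<exists>t. t \<in> cubes X 2 \<and> marked X 2 t \<and> act X 1 2 (face_op 1 False) t = a \<and>
     act X 1 2 (face_op 1 True) t = b \<and> act X 1 2 (face_op 2 False) t = c \<and> act X 1 2 (face_op 2 True) t = d)"

context
  fixes X :: "'a mcset" and x y f g :: 'a
  assumes X: "comical X"
    and cx: "x \<in> cubes X 0" and cy: "y \<in> cubes X 0" and cf: "f \<in> cubes X 1" and cg: "g \<in> cubes X 1"
    and e1: "act X 0 1 (face_op 1 False) f = x" and e2: "act X 0 1 (face_op 1 False) g = x"
    and e3: "act X 0 1 (face_op 1 True) f = y" and e4: "act X 0 1 (face_op 1 True) g = y"
begin

lemma mcs: "marked_cubical_set X" using X unfolding comical_def by blast
lemma cs: "cubical_set X" using mcs unfolding marked_cubical_set_def by blast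

lemmas SS = face_simps[OF cs, simplified] mk_sg[OF mcs, simplified] mk_D[OF mcs, simplified] mk_C[OF mcs, simplified] cx cy cf[simplified] cg[simplified] e1[simplified] e2[simplified] e3[simplified] e4[simplified] good_face_def

lemma i13: assumes "HAS X g (sg X y) f (sg X y)" shows "HAS X f g (sg X x) (sg X y)"
proof -
  obtain s where s: "s \<in> cubes X 2" "marked X 2 s" "act X 1 2 (face_op 1 False) s = g"
     "act X 1 2 (face_op 1 True) s = sg X y" "act X 1 2 (face_op 2 False) s = f" "act X 1 2 (face_op 2 True) s = sg X y"
    using assms unfolding HAS_def by blast
  have "\<exists>t. t \<in> cubes X 2 \<and> marked X 2 t \<and> (\<forall>j\<in>{1,2}. \<forall>e'\<in>{True,False}. act X 1 2 (face_op j e') t =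
     (if j < 2 then act X 1 2 (face_op (2-1) False) (cub6 (act X 2 1 (degen_op 1) f) s s (act X 2 1 (conn_op 1 True) f) (act X 2 1 (conn_op 1 False) f) (act X 2 1 (degen_op 1) (sg X y)) j e')
      else act X 1 2 (face_op 2 False) (cub6 (act X 2 1 (degen_op 1) f) s s (act X 2 1 (conn_op 1 True) f) (act X 2 1 (conn_op 1 False) f) (act X 2 1 (degen_op 1) (sg X y)) (Suc j) e')))"
    by (rule fill[OF X]) (simp_all add: cub6_def SS s[simplified])
  then show ?thesis unfolding HAS_def apply (simp add: cub6_def SS s[simplified]) by blast
qed

lemma i35: assumes "HAS X f g (sg X x) (sg X y)" shows "HAS X (sg X x) (sg X y) f g"
proof -
  obtain s where s: "s \<in> cubes X 2" "marked X 2 s" "act X 1 2 (face_op 1 False) s = f"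
     "act X 1 2 (face_op 1 True) s = g" "act X 1 2 (face_op 2 False) s = (sg X x)" "act X 1 2 (face_op 2 True) s = (sg X y)"
    using assms unfolding HAS_def by blast
  show ?thesis unfolding HAS_def using fill[OF X, where k=1 and e=False and y="cub6 s (act X 2 1 (degen_op 2) g) (act X 2 1 (degen_op 1) (sg X x)) (act X 2 1 (degen_op 1) (sg X y)) s (act X 2 1 (degen_op 1) g)"]
    apply (simp add: cub6_def SS s[simplified]) by blast
qed

lemma i57: assumes "HAS X (sg X x) (sg X y) f g" shows "HAS X (sg X x) f (sg X x) g"
proof -
  obtain s where s: "s \<in> cubes X 2" "marked X 2 s" "act X 1 2 (face_op 1 False) s = (sg X x)"
     "act X 1 2 (face_op 1 True) s = (sg X y)" "act X 1 2 (face_op 2 False) s = f" "act X 1 2 (face_op 2 True) s = g"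
    using assms unfolding HAS_def by blast
  show ?thesis unfolding HAS_def using fill[OF X, where k=2 and e=False and y="cub6 (act X 2 1 (degen_op 1) (sg X x)) (act X 2 1 (conn_op 1 True) f) s s (act X 2 1 (conn_op 1 False) f) (act X 2 1 (degen_op 2) g)"]
    apply (simp add: cub6_def SS s[simplified]) by blast
qed

lemma i72: assumes "HAS X (sg X x) f (sg X x) g" shows "HAS X f (sg X y) g (sg X y)"
proof -
  obtain s where s: "s \<in> cubes X 2" "marked X 2 s" "act X 1 2 (face_op 1 False) s = (sg X x)"
     "act X 1 2 (face_op 1 True) s = f" "act X 1 2 (face_op 2 False) s = (sg X x)" "act X 1 2 (face_op 2 True) s = g"
    using assms unfolding HAS_def by blast
  show ?thesis unfolding HAS_def using fill[OF X, where k=2 and e=True and y="cub6 (act X 2 1 (degen_op 1) f) (act X 2 1 (conn_op 1 True) f) (act X 2 1 (degen_op 1) f) s s (act X 2 1 (degen_op 1) (sg X y))"]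
    apply (simp add: cub6_def SS s[simplified]) by blast
qed

end

theorem proposition4p1:
  fixes X :: "'a mcset" and x y f g :: 'a
  assumes "comical X"
    and "x \<in> cubes X 0" and "y \<in> cubes X 0" and "f \<in> cubes X 1" and "g \<in> cubes X 1"
    and "act X 0 1 (face_op 1 False) f = x" and "act X 0 1 (face_op 1 False) g = x"
    and "act X 0 1 (face_op 1 True) f = y" and "act X 0 1 (face_op 1 True) g = y"
  defines "xs1 \<equiv> act X 1 0 (degen_op 1) x" and "ys1 \<equiv> act X 1 0 (degen_op 1) y"
  defines "conds \<equiv> [(g, ys1, f, ys1), (f, ys1, g, ys1), (f, g, xs1, ys1), (g, f, xs1, ys1),
                    (xs1, ys1, f, g), (xs1, ys1, g, f), (xs1, f, xs1, g), (xs1, g, xs1, f)]"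
  defines "bdry \<equiv> \<lambda>s. (act X 1 2 (face_op 1 False) s, act X 1 2 (face_op 1 True) s,
                        act X 1 2 (face_op 2 False) s, act X 1 2 (face_op 2 True) s)"
  assumes "i < 8" and "j < 8"
    and "\<exists>s. s \<in> cubes X 2 \<and> marked X 2 s \<and> bdry s = conds ! i"
  shows "\<exists>s. s \<in> cubes X 2 \<and> marked X 2 s \<and> bdry s = conds ! j"
  proof -
  note A = assms(1-9)
  define Q where "Q c = (\<exists>s. s \<in> cubes X 2 \<and> marked X 2 s \<and> bdry s = c)" for c
  have P: "\<And>a b c d. Q (a,b,c,d) = HAS X a b c d"
    unfolding Q_def HAS_def bdry_def by auto
  note f13 = i13[OF A] and f35 = i35[OF A] and f57 = i57[OF A] and f72 = i72[OF A]
  note g13 = i13[of X x y g f, OF assms(1) assms(2) assms(3) assms(5) assms(4) assms(7) assms(6) assms(9) assms(8)]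
  note g35 = i35[of X x y g f, OF assms(1) assms(2) assms(3) assms(5) assms(4) assms(7) assms(6) assms(9) assms(8)]
  note g57 = i57[of X x y g f, OF assms(1) assms(2) assms(3) assms(5) assms(4) assms(7) assms(6) assms(9) assms(8)]
  note g72 = i72[of X x y g f, OF assms(1) assms(2) assms(3) assms(5) assms(4) assms(7) assms(6) assms(9) assms(8)]
  have E: "Q (conds ! k) = HAS X g ys1 f ys1" if "k < 8" for k
  proof -
    have "k = 0 \<or> k = 1 \<or> k = 2 \<or> k = 3 \<or> k = 4 \<or> k = 5 \<or> k = 6 \<or> k = 7" using that by arith
    thus ?thesis unfolding conds_def xs1_def ys1_def
      using f13 f35 f57 f72 g13 g35 g57 g72 by (auto simp: P)
  qed
  show ?thesis using E[OF \<open>i < 8\<close>] E[OF \<open>j < 8\<close>] \<open>\<exists>s. s \<in> cubes X 2 \<and> marked X 2 s \<and> bdry s = conds ! i\<close> unfolding Q_def by blast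
qed

end
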